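(* Let $G$ be a group of order $n$ with identity $e$ and let $S\subseteq G\setminus\{e\}$ with $|S|=n-2$. If $G$ has a rotational sequencing, then $G$ has an $S$-sequencing.
   Context: For $S\subseteq G\setminus\{e\}$ with $|S|=k$, an $S$-sequencing of $G$ is an ordering $(g_1,\dots,g_k)$ of the elements of $S$ such that the partial products $h_0=e$, $h_i=g_1\cdots g_i$ ($1\le i\le k$) are pairwise distinct. Let $(a_1,\dots,a_{n-1})$ be a cyclic arrangement of the non-identity elements of $G$ and set $b_i=a_i^{-1}a_{i+1}$ for $1\le i\le n-1$, indices taken modulo $n-1$ (so $b_{n-1}=a_{n-1}^{-1}a_1$). If $b_1,\dots,b_{n-1}$ are pairwise distinct, then $(b_1,\dots,b_{n-1})$ is called a rotational sequencing of $G$. *)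

theory Defs
  imports "HOL-Algebra.Group"
begin

definition partial_prod :: "('a, 'b) monoid_scheme \<Rightarrow> 'a list \<Rightarrow> nat \<Rightarrow> 'a" where
  "partial_prod G gs i = foldl (\<lambda>x y. x \<otimes>\<^bsub>G\<^esub> y) \<one>\<^bsub>G\<^esub> (take i gs)"

definition is_S_sequencing :: "('a, 'b) monoid_scheme \<Rightarrow> 'a set \<Rightarrow> 'a list \<Rightarrow> bool" where
  "is_S_sequencing G S gs \<longleftrightarrow>
     distinct gs \<and> set gs = S \<and>
     distinct (map (partial_prod G gs) [0..<Suc (length gs)])"

definition has_S_sequencing :: "('a, 'b) monoid_scheme \<Rightarrow> 'a set \<Rightarrow> bool" where
  "has_S_sequencing G S \<longleftrightarrow> (\<exists>gs. is_S_sequencing G S gs)"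

definition rot_seq :: "('a, 'b) monoid_scheme \<Rightarrow> 'a list \<Rightarrow> 'a list" where
  "rot_seq G as = map (\<lambda>i. inv\<^bsub>G\<^esub> (as ! i) \<otimes>\<^bsub>G\<^esub> (as ! ((Suc i) mod length as)))
                      [0..<length as]"

definition is_rotational_sequencing :: "('a, 'b) monoid_scheme \<Rightarrow> 'a list \<Rightarrow> bool" where
  "is_rotational_sequencing G bs \<longleftrightarrow>
     (\<exists>as. distinct as \<and> set as = carrier G - {\<one>\<^bsub>G\<^esub>} \<and>
           bs = rot_seq G as \<and> distinct bs)"

definition has_rotational_sequencing :: "('a, 'b) monoid_scheme \<Rightarrow> bool" where
  "has_rotational_sequencing G \<longleftrightarrow> (\<exists>bs. is_rotational_sequencing G bs)"

end

theory Submission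
  imports Defs
begin

lemma mod_inj_aux:
  fixes k i i' m :: nat
  assumes "i < m" "i' < m" "(k + i) mod m = (k + i') mod m"
  shows "i = i'"
proof -
  have "i mod m = i' mod m" using assms(3)
    by (simp add: add.assoc nat_mod_eq_iff)
  then show ?thesis using assms by simp
qed

theorem lemma4p2:
  fixes G :: "('a, 'b) monoid_scheme" and S :: "'a set"
  assumes "group G" and "finite (carrier G)"
    and "S \<subseteq> carrier G - {\<one>\<^bsub>G\<^esub>}"
    and "card S = card (carrier G) - 2"
    and "has_rotational_sequencing G"
  shows "has_S_sequencing G S"
proof (cases "card (carrier G) \<le> 2")
  case True
  have fS: "finite S" using assms(2,3) finite_subset by blast
  hence "S = {}" using True assms(4) by simp
  moreover have "is_S_sequencing G {} []"
    unfolding is_S_sequencing_def by simp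
  ultimately show ?thesis unfolding has_S_sequencing_def by blast
next
  case False
  interpret group G by (rule assms(1))
  obtain as where as: "distinct as" "set as = carrier G - {\<one>\<^bsub>G\<^esub>}" "distinct (rot_seq G as)"
    using assms(5) unfolding has_rotational_sequencing_def is_rotational_sequencing_def by blast
  define m where "m = length as"
  define bs where "bs = rot_seq G as"
  have m: "m = card (carrier G) - 1"
    using as(1,2) distinct_card[OF as(1)] assms(2) m_def by (simp add: card_Diff_singleton)
  have m2: "m \<ge> 2" using m False by simp
  have m0: "0 < m" using m2 by simp
  have lbs: "length bs = m" unfolding bs_def rot_seq_def m_def by simp
  have bsn: "bs ! p = inv\<^bsub>G\<^esub> (as ! p) \<otimes>\<^bsub>G\<^esub> as ! (Suc p mod m)" if "p < m" for p
    using that unfolding bs_def rot_seq_def m_def by simp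
  have asc: "as ! p \<in> carrier G" if "p < m" for p
    using that as(2) m_def nth_mem by fastforce
  have bsc: "set bs \<subseteq> carrier G - {\<one>\<^bsub>G\<^esub>}"
  proof
    fix y assume "y \<in> set bs"
    then obtain p where p: "p < m" "y = bs ! p" using lbs by (metis in_set_conv_nth)
    have ne: "as ! p \<noteq> as ! (Suc p mod m)"
    proof
      assume "as ! p = as ! (Suc p mod m)"
      hence "p = Suc p mod m" using nth_eq_iff_index_eq[OF as(1), of p "Suc p mod m"] p m_def m0
        by simp
      moreover have "Suc p < m \<or> Suc p = m" using p by auto
      ultimately show False using m2 by auto
    qed
    have "Suc p mod m < m" using p by simp
    have "y \<noteq> \<one>\<^bsub>G\<^esub>"
    proof
      assume "y = \<one>\<^bsub>G\<^esub>"
      hence "inv\<^bsub>G\<^esub> (as ! p) \<otimes>\<^bsub>G\<^esub> as ! (Suc p mod m) = \<one>\<^bsub>G\<^esub>" using p bsn by simp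
      hence "inv\<^bsub>G\<^esub> (as ! (Suc p mod m)) = inv\<^bsub>G\<^esub> (as ! p)"
        using inv_equality asc p \<open>Suc p mod m < m\<close> by simp
      hence "as ! (Suc p mod m) = as ! p" using inv_inv asc p \<open>Suc p mod m < m\<close> by metis
      thus False using ne by simp
    qed
    moreover have "y \<in> carrier G" using p bsn asc by simp
    ultimately show "y \<in> carrier G - {\<one>\<^bsub>G\<^esub>}" by simp
  qed
  have setbs: "set bs = carrier G - {\<one>\<^bsub>G\<^esub>}"
  proof (rule card_subset_eq[OF _ bsc])
    show "finite (carrier G - {\<one>\<^bsub>G\<^esub>})" using assms(2) by simp
    show "card (set bs) = card (carrier G - {\<one>\<^bsub>G\<^esub>})"
      using distinct_card[of bs] as(3) bs_def lbs m assms(2) by (simp add: card_Diff_singleton)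
  qed
  have "card (carrier G - {\<one>\<^bsub>G\<^esub>}) = card S + 1" using m m2 assms(4) assms(2)
    by (simp add: card_Diff_singleton)
  then obtain x where x: "x \<in> carrier G - {\<one>\<^bsub>G\<^esub>}" "x \<notin> S"
  proof -
    have fS: "finite S" using assms(2,3) finite_subset by blast
    have "\<not> carrier G - {\<one>\<^bsub>G\<^esub>} \<subseteq> S"
    proof
      assume "carrier G - {\<one>\<^bsub>G\<^esub>} \<subseteq> S"
      from card_mono[OF fS this] show False
        using \<open>card (carrier G - {\<one>\<^bsub>G\<^esub>}) = card S + 1\<close> by linarith
    qed
    thus ?thesis using that by blast
  qed
  have Sx: "S = carrier G - {\<one>\<^bsub>G\<^esub>} - {x}"
  proof (rule card_subset_eq)
    show "finite (carrier G - {\<one>\<^bsub>G\<^esub>} - {x})" using assms(2) by simp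
    show "S \<subseteq> carrier G - {\<one>\<^bsub>G\<^esub>} - {x}" using assms(3) x by blast
    show "card S = card (carrier G - {\<one>\<^bsub>G\<^esub>} - {x})"
      using \<open>card (carrier G - {\<one>\<^bsub>G\<^esub>}) = card S + 1\<close> x assms(2) by (simp add: card_Diff_singleton)
  qed
  obtain j where j: "j < m" "bs ! j = x" using x setbs lbs by (metis in_set_conv_nth)
  define k where "k = Suc j mod m"
  define a where "a i = as ! ((k + i) mod m)" for i
  define gs where "gs = map (\<lambda>i. bs ! ((k + i) mod m)) [0..<m-1]"
  have ac: "a i \<in> carrier G" for i unfolding a_def using asc m2 by simp
  have lgs: "length gs = m - 1" unfolding gs_def by simp
  have gsn: "gs ! i = inv\<^bsub>G\<^esub> (a i) \<otimes>\<^bsub>G\<^esub> a (Suc i)" if "i < m - 1" for i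
  proof -
    have "gs ! i = bs ! ((k + i) mod m)" using that unfolding gs_def by simp
    also have "\<dots> = inv\<^bsub>G\<^esub> (a i) \<otimes>\<^bsub>G\<^esub> as ! (Suc ((k + i) mod m) mod m)"
      using bsn m2 unfolding a_def by simp
    also have "Suc ((k + i) mod m) mod m = (k + Suc i) mod m" by (simp add: mod_Suc_eq)
    finally show ?thesis unfolding a_def by simp
  qed
  have pp: "i \<le> m - 1 \<Longrightarrow> partial_prod G gs i = inv\<^bsub>G\<^esub> (a 0) \<otimes>\<^bsub>G\<^esub> a i" for i
  proof (induction i)
    case 0
    then show ?case unfolding partial_prod_def using ac by simp
  next
    case (Suc i)
    have "take (Suc i) gs = take i gs @ [gs ! i]" using Suc.prems lgs
      by (simp add: take_Suc_conv_app_nth)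
    hence "partial_prod G gs (Suc i) = partial_prod G gs i \<otimes>\<^bsub>G\<^esub> gs ! i"
      unfolding partial_prod_def by simp
    also have "\<dots> = (inv\<^bsub>G\<^esub> (a 0) \<otimes>\<^bsub>G\<^esub> a i) \<otimes>\<^bsub>G\<^esub> (inv\<^bsub>G\<^esub> (a i) \<otimes>\<^bsub>G\<^esub> a (Suc i))"
      using Suc gsn by simp
    also have "\<dots> = inv\<^bsub>G\<^esub> (a 0) \<otimes>\<^bsub>G\<^esub> a (Suc i)" using ac
      by (simp add: m_assoc[symmetric]) (simp add: m_assoc)
    finally show ?case .
  qed
  have ainj: "i = i'" if "i < m" "i' < m" "a i = a i'" for i i'
  proof -
    have "(k + i) mod m = (k + i') mod m"
      using that nth_eq_iff_index_eq[OF as(1), of "(k + i) mod m" "(k + i') mod m"] m_def m0 unfolding a_def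
      by simp
    thus ?thesis using mod_inj_aux that by blast
  qed
  have d1: "distinct (map (partial_prod G gs) [0..<Suc (length gs)])"
  proof -
    have eq: "[0..<Suc (length gs)] = [0..<m]" using lgs m2 by simp
    have "map (partial_prod G gs) [0..<m] = map (\<lambda>i. inv\<^bsub>G\<^esub> (a 0) \<otimes>\<^bsub>G\<^esub> a i) [0..<m]"
      using pp by (intro map_cong) auto
    moreover have "inj_on (\<lambda>i. inv\<^bsub>G\<^esub> (a 0) \<otimes>\<^bsub>G\<^esub> a i) {0..<m}"
      proof (rule inj_onI)
      fix i i' assume ii: "i \<in> {0..<m}" "i' \<in> {0..<m}"
        "inv\<^bsub>G\<^esub> (a 0) \<otimes>\<^bsub>G\<^esub> a i = inv\<^bsub>G\<^esub> (a 0) \<otimes>\<^bsub>G\<^esub> a i'"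
      hence "a i = a i'" using ac by simp
      thus "i = i'" using ainj ii by simp
    qed
    ultimately show ?thesis unfolding eq by (metis distinct_map distinct_upt set_upt)
  qed
  have idx_inj: "inj_on (\<lambda>i. (k + i) mod m) {0..<m}"
    using mod_inj_aux by (intro inj_onI) auto
  have d2: "distinct gs"
    unfolding gs_def distinct_map
  proof
    show "distinct [0..<m-1]" by simp
    have "inj_on (\<lambda>i. bs ! ((k + i) mod m)) {0..<m}"
    proof (rule inj_onI)
      fix i i' assume "i \<in> {0..<m}" "i' \<in> {0..<m}" "bs ! ((k + i) mod m) = bs ! ((k + i') mod m)"
      hence "(k + i) mod m = (k + i') mod m"
        using nth_eq_iff_index_eq[of bs "(k + i) mod m" "(k + i') mod m"] as(3) bs_def lbs m0 by simp
      thus "i = i'" using mod_inj_aux \<open>i \<in> {0..<m}\<close> \<open>i' \<in> {0..<m}\<close> by simp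
    qed
    thus "inj_on (\<lambda>i. bs ! ((k + i) mod m)) (set [0..<m-1])"
      by (rule inj_on_subset) auto
  qed
  have d3: "set gs = S"
  proof (rule card_subset_eq)
    show "finite S" using Sx assms(2) by simp
    show "set gs \<subseteq> S"
    proof
      fix y assume "y \<in> set gs"
      then obtain i where i: "i < m - 1" "y = bs ! ((k + i) mod m)" unfolding gs_def by auto
      have "y \<in> set bs" using i lbs m2 by simp
      moreover have "y \<noteq> x"
      proof
        assume "y = x"
        hence "bs ! ((k + i) mod m) = bs ! j" using i j by simp
        hence "(k + i) mod m = j"
          using nth_eq_iff_index_eq[of bs "(k + i) mod m" j] as(3) bs_def lbs m0 j by simp
        moreover have "j = (k + (m - 1)) mod m"
        proof -
          have "(k + (m - 1)) mod m = (Suc j mod m + (m - 1)) mod m" by (simp add: k_def)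
          also have "\<dots> = (Suc j + (m - 1)) mod m" by (simp add: mod_add_left_eq)
          also have "Suc j + (m - 1) = j + m" using m2 by simp
          finally show ?thesis using j by simp
        qed
        ultimately have "(k + i) mod m = (k + (m - 1)) mod m" by simp
        moreover have "i < m" "m - 1 < m" using i m0 by auto
        ultimately have "i = m - 1" using mod_inj_aux by blast
        thus False using i by simp
      qed
      ultimately show "y \<in> S" using Sx setbs by blast
    qed
    show "card (set gs) = card S"
      using distinct_card[OF d2] lgs \<open>card (carrier G - {\<one>\<^bsub>G\<^esub>}) = card S + 1\<close> m assms(2)
      by (simp add: card_Diff_singleton)
  qed
  show ?thesis unfolding has_S_sequencing_def is_S_sequencing_def
    using d1 d2 d3 by blast
qed

end
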